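(* For every $\tau\in[0,\infty)$, the Lane–Emden equation $x''(t)+\frac{2}{t}x'(t)+x(t)=0$, $t\in(\tau,\infty)$, is not Ulam stable on $(\tau,\infty)$.
   Context: Ulam stability (scalar case $n=1$, real or complex valued functions): the equation $\alpha(t)x''+\beta(t)x'+\gamma(t)x=f(t)$ is Ulam stable on $I$ if there exists $L>0$ such that for every $\varepsilon>0$ and every $\xi\in C^2(I)$ with $\sup_{t\in I}|\alpha\xi''+\beta\xi'+\gamma\xi-f|\le\varepsilon$, there is a solution $x$ with $\sup_{t\in I}|\xi(t)-x(t)|\le L\varepsilon$. *)

theory Defs
  imports "HOL-Analysis.Analysis"
begin

text \<open>x is in C^2(I) with first derivative x' and second derivative x'' on I
  (I open interval, so derivatives are ordinary two-sided ones).\<close>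
definition C2_on :: "real set \<Rightarrow> (real \<Rightarrow> 'a::real_normed_vector) \<Rightarrow> (real \<Rightarrow> 'a) \<Rightarrow> (real \<Rightarrow> 'a) \<Rightarrow> bool" where
  "C2_on I x x' x'' \<longleftrightarrow>
     (\<forall>t\<in>I. (x has_vector_derivative x' t) (at t) \<and> (x' has_vector_derivative x'' t) (at t))
     \<and> continuous_on I x''"

definition ulam_stable :: "real set \<Rightarrow> (real \<Rightarrow> 'a::real_normed_field) \<Rightarrow> (real \<Rightarrow> 'a) \<Rightarrow> (real \<Rightarrow> 'a) \<Rightarrow> (real \<Rightarrow> 'a) \<Rightarrow> bool" where
  "ulam_stable I \<alpha> \<beta> \<gamma> f \<longleftrightarrow>
     (\<exists>L>0. \<forall>\<epsilon>>0. \<forall>\<xi> \<xi>' \<xi>''.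
        C2_on I \<xi> \<xi>' \<xi>'' \<and>
        (\<forall>t\<in>I. norm (\<alpha> t * \<xi>'' t + \<beta> t * \<xi>' t + \<gamma> t * \<xi> t - f t) \<le> \<epsilon>)
        \<longrightarrow> (\<exists>x x' x''. C2_on I x x' x'' \<and>
               (\<forall>t\<in>I. \<alpha> t * x'' t + \<beta> t * x' t + \<gamma> t * x t = f t) \<and>
               (\<forall>t\<in>I. norm (\<xi> t - x t) \<le> L * \<epsilon>)))"

end

theory Submission
  imports Defs
begin

lemma energy_bound:
  fixes x x' x'' :: "real \<Rightarrow> real" and \<tau> :: real
  assumes tau: "\<tau> \<ge> 0"
    and d: "\<And>t. t > \<tau> \<Longrightarrow> (x has_real_derivative x' t) (at t) \<and> (x' has_real_derivative x'' t) (at t)"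
    and e: "\<And>t. t > \<tau> \<Longrightarrow> x'' t + 2 / t * x' t + x t = 0"
  shows "\<exists>c. \<forall>t\<in>{\<tau><..}. (t * x t)^2 \<le> c"
proof -
  define E where "E t = (x t + t * x' t)^2 + (t * x t)^2" for t
  have "\<exists>c. \<forall>t\<in>{\<tau><..}. E t = c"
  proof (rule has_field_derivative_zero_constant)
    show "convex {\<tau><..}" by simp
    fix t assume "t \<in> {\<tau><..}"
    hence t: "t > \<tau>" by simp
    hence tp: "t > 0" using tau by simp
    note dd = d[OF t]
    have hx: "(x has_real_derivative x' t) (at t)" and hx': "(x' has_real_derivative x'' t) (at t)" using dd by auto
    have hy: "((\<lambda>t. t * x t) has_real_derivative (1 * x t + t * x' t)) (at t)"
      using DERIV_mult[OF DERIV_ident hx] by (simp add: algebra_simps)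
    have hy': "((\<lambda>t. x t + t * x' t) has_real_derivative (x' t + (1 * x' t + t * x'' t))) (at t)"
      using DERIV_add[OF hx DERIV_mult[OF DERIV_ident hx']] by (simp add: algebra_simps)
    have "(E has_real_derivative
        2 * (x t + t * x' t) * (x' t + (1 * x' t + t * x'' t)) + 2 * (t * x t) * (1 * x t + t * x' t)) (at t)"
      unfolding E_def power2_eq_square
      using DERIV_add[OF DERIV_mult[OF hy' hy'] DERIV_mult[OF hy hy]] by (simp add: algebra_simps)
    moreover have "2 * (x t + t * x' t) * (x' t + (1 * x' t + t * x'' t)) + 2 * (t * x t) * (1 * x t + t * x' t)
        = 2 * (x t + t * x' t) * t * (x'' t + 2 / t * x' t + x t)"
      using tp by (simp add: field_simps)
    ultimately have "(E has_real_derivative 0) (at t)" using e[OF t] by simp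
    thus "(E has_field_derivative 0) (at t within {\<tau><..})"
      by (rule has_field_derivative_at_within)
  qed
  then obtain c where c: "\<forall>t\<in>{\<tau><..}. E t = c" by blast
  show ?thesis
  proof (intro exI ballI)
    fix t assume "t \<in> {\<tau><..}"
    thus "(t * x t)^2 \<le> c" using c unfolding E_def
      by (metis add_increasing zero_le_power2 order_refl)
  qed
qed

definition xi :: "real \<Rightarrow> real" where "xi t = (cos t + t * sin t) / 4"

lemma xi_far:
  fixes x x' x'' :: "real \<Rightarrow> real" and \<tau> M :: real
  assumes tau: "\<tau> \<ge> 0"
    and d: "\<And>t. t > \<tau> \<Longrightarrow> (x has_real_derivative x' t) (at t) \<and> (x' has_real_derivative x'' t) (at t)"
    and e: "\<And>t. t > \<tau> \<Longrightarrow> x'' t + 2 / t * x' t + x t = 0"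
    and close: "\<And>t. t > \<tau> \<Longrightarrow> \<bar>xi t - x t\<bar> \<le> M"
  shows False
proof -
  obtain c where c: "\<forall>t\<in>{\<tau><..}. (t * x t)^2 \<le> c" using energy_bound[OF tau d e] by blast
  obtain n :: nat where n: "real n > \<tau> + 4 * (\<bar>M\<bar> + 1 + \<bar>c\<bar>) + 1" using reals_Archimedean2 by blast
  define t where "t = 2 * real n * pi + pi / 2"
  have "2 * real n * pi \<ge> real n" proof -
    have "real n * 1 \<le> real n * (2 * pi)" using pi_gt3 by (intro mult_left_mono) auto
    thus ?thesis by (simp add: mult.commute mult.left_commute)
  qed
  hence tge: "t > \<tau> + 4 * (\<bar>M\<bar> + 1 + \<bar>c\<bar>) + 1" using n pi_gt_zero unfolding t_def by linarith
  hence tt: "t > \<tau>" "t \<ge> 1" using tau by auto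
  have s: "sin t = 1" "cos t = 0" unfolding t_def by (simp_all add: sin_add cos_add)
  have xit: "xi t = t / 4" unfolding xi_def s by simp
  have "(t * x t)^2 \<le> c" using c tt by simp
  have "\<bar>t * x t\<bar> \<le> 1 + \<bar>c\<bar>"
  proof (rule ccontr)
    assume "\<not> ?thesis"
    hence "1 + \<bar>c\<bar> < \<bar>t * x t\<bar>" by simp
    hence "(1 + \<bar>c\<bar>)^2 < \<bar>t * x t\<bar>^2" by (intro power_strict_mono) auto
    moreover have "\<bar>c\<bar> \<le> (1 + \<bar>c\<bar>)^2" by (simp add: power2_eq_square algebra_simps)
    ultimately show False using \<open>(t * x t)^2 \<le> c\<close> by simp
  qed
  hence "\<bar>x t\<bar> \<le> 1 + \<bar>c\<bar>" using tt
  proof -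
    have "\<bar>x t\<bar> \<le> t * \<bar>x t\<bar>" using tt by (simp add: mult_le_cancel_right1)
    also have "\<dots> = \<bar>t * x t\<bar>" using tt by (simp add: abs_mult)
    finally show ?thesis using \<open>\<bar>t * x t\<bar> \<le> 1 + \<bar>c\<bar>\<close> by simp
  qed
  moreover have "\<bar>xi t - x t\<bar> \<le> M" using close tt by simp
  ultimately have "t / 4 - x t \<le> M" "x t \<le> 1 + \<bar>c\<bar>" "M \<le> \<bar>M\<bar>" using xit by auto
  hence "t / 4 \<le> \<bar>M\<bar> + 1 + \<bar>c\<bar>" by linarith
  thus False using tge tau by (simp add: field_simps)
qed

lemma xi_deriv:
  "(xi has_real_derivative t * cos t / 4) (at t)"
  "((\<lambda>t. t * cos t / 4) has_real_derivative (cos t - t * sin t) / 4) (at t)"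
   apply (unfold xi_def)
   apply (rule derivative_eq_intros refl | simp)+
  done

lemma xi_resid: "t > 0 \<Longrightarrow> (cos t - t * sin t) / 4 + 2 / t * (t * cos t / 4) + xi t = cos t"
  unfolding xi_def by (simp add: field_simps)


lemma xi_C2: "C2_on {\<tau><..} xi (\<lambda>t. t * cos t / 4) (\<lambda>t. (cos t - t * sin t) / 4)"
  unfolding C2_on_def
  using xi_deriv by (auto simp: has_real_derivative_iff_has_vector_derivative[symmetric]
      intro!: continuous_intros)

lemma cvd: "(f has_real_derivative d) (at t) \<Longrightarrow>
  ((\<lambda>t. complex_of_real (f t)) has_vector_derivative complex_of_real d) (at t)"
  unfolding has_vector_derivative_complex_iff by simp

lemma xi_C2c: "C2_on {\<tau><..} (\<lambda>t. complex_of_real (xi t)) (\<lambda>t. complex_of_real (t * cos t / 4))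
   (\<lambda>t. complex_of_real ((cos t - t * sin t) / 4))"
  unfolding C2_on_def
  using cvd[OF xi_deriv(1)] cvd[OF xi_deriv(2)]
  by (auto simp del: of_real_mult of_real_divide of_real_diff intro!: continuous_intros)

theorem mainTheorem10:
  fixes \<tau> :: real
  assumes "\<tau> \<ge> 0"
  shows "\<not> ulam_stable {\<tau><..} (\<lambda>_. 1::real) (\<lambda>t. 2 / t) (\<lambda>_. 1) (\<lambda>_. 0)
       \<and> \<not> ulam_stable {\<tau><..} (\<lambda>_. 1::complex) (\<lambda>t. complex_of_real (2 / t)) (\<lambda>_. 1) (\<lambda>_. 0)"
proof
  show "\<not> ulam_stable {\<tau><..} (\<lambda>_. 1::real) (\<lambda>t. 2 / t) (\<lambda>_. 1) (\<lambda>_. 0)"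
  proof
    assume "ulam_stable {\<tau><..} (\<lambda>_. 1::real) (\<lambda>t. 2 / t) (\<lambda>_. 1) (\<lambda>_. 0)"
    then obtain L where L: "\<forall>\<epsilon>>0. \<forall>\<xi> \<xi>' \<xi>''.
        C2_on {\<tau><..} \<xi> \<xi>' \<xi>'' \<and>
        (\<forall>t\<in>{\<tau><..}. norm (1 * \<xi>'' t + 2 / t * \<xi>' t + 1 * \<xi> t - 0) \<le> \<epsilon>)
        \<longrightarrow> (\<exists>x x' x''. C2_on {\<tau><..} x x' x'' \<and>
               (\<forall>t\<in>{\<tau><..}. 1 * x'' t + 2 / t * x' t + 1 * x t = (0::real)) \<and>
               (\<forall>t\<in>{\<tau><..}. norm (\<xi> t - x t) \<le> L * \<epsilon>))"
      unfolding ulam_stable_def by blast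
    have res: "\<forall>t\<in>{\<tau><..}. norm (1 * ((cos t - t * sin t) / 4) + 2 / t * (t * cos t / 4) + 1 * xi t - 0) \<le> (1::real)"
    proof
      fix t assume "t \<in> {\<tau><..}"
      hence "t > 0" using assms by simp
      thus "norm (1 * ((cos t - t * sin t) / 4) + 2 / t * (t * cos t / 4) + 1 * xi t - 0) \<le> (1::real)"
        using xi_resid[of t] by simp
    qed
    obtain x x' x'' where x: "C2_on {\<tau><..} x x' x''"
      "\<forall>t\<in>{\<tau><..}. 1 * x'' t + 2 / t * x' t + 1 * x t = (0::real)"
      "\<forall>t\<in>{\<tau><..}. norm (xi t - x t) \<le> L * 1"
      using L[rule_format, OF _ conjI[OF xi_C2 res]] by force
    show False
    proof (rule xi_far[OF assms, of x x' x'' "L * 1"])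
      fix t assume t: "t > \<tau>"
      show "(x has_real_derivative x' t) (at t) \<and> (x' has_real_derivative x'' t) (at t)"
        using x(1) t unfolding C2_on_def has_real_derivative_iff_has_vector_derivative by simp
      show "x'' t + 2 / t * x' t + x t = 0" using x(2) t by simp
      show "\<bar>xi t - x t\<bar> \<le> L * 1" using x(3) t by simp
    qed
  qed
  show "\<not> ulam_stable {\<tau><..} (\<lambda>_. 1::complex) (\<lambda>t. complex_of_real (2 / t)) (\<lambda>_. 1) (\<lambda>_. 0)"
  proof
    assume "ulam_stable {\<tau><..} (\<lambda>_. 1::complex) (\<lambda>t. complex_of_real (2 / t)) (\<lambda>_. 1) (\<lambda>_. 0)"
    then obtain L where L: "\<forall>\<epsilon>>0. \<forall>\<xi> \<xi>' \<xi>''.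
        C2_on {\<tau><..} \<xi> \<xi>' \<xi>'' \<and>
        (\<forall>t\<in>{\<tau><..}. norm (1 * \<xi>'' t + complex_of_real (2 / t) * \<xi>' t + 1 * \<xi> t - 0) \<le> \<epsilon>)
        \<longrightarrow> (\<exists>x x' x''. C2_on {\<tau><..} x x' x'' \<and>
               (\<forall>t\<in>{\<tau><..}. 1 * x'' t + complex_of_real (2 / t) * x' t + 1 * x t = (0::complex)) \<and>
               (\<forall>t\<in>{\<tau><..}. norm (\<xi> t - x t) \<le> L * \<epsilon>))"
      unfolding ulam_stable_def by blast
    have res: "\<forall>t\<in>{\<tau><..}. norm (1 * complex_of_real ((cos t - t * sin t) / 4)
         + complex_of_real (2 / t) * complex_of_real (t * cos t / 4) + 1 * complex_of_real (xi t) - 0) \<le> (1::real)"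
    proof
      fix t assume "t \<in> {\<tau><..}"
      hence "t > 0" using assms by simp
      hence e: "(cos t - t * sin t) / 4 + 2 / t * (t * cos t / 4) + xi t = cos t" by (rule xi_resid)
      have "1 * complex_of_real ((cos t - t * sin t) / 4)
         + complex_of_real (2 / t) * complex_of_real (t * cos t / 4) + 1 * complex_of_real (xi t) - 0
         = complex_of_real ((cos t - t * sin t) / 4 + 2 / t * (t * cos t / 4) + xi t)"
        by simp
      also have "\<dots> = complex_of_real (cos t)" using e by simp
      finally show "norm (1 * complex_of_real ((cos t - t * sin t) / 4)
         + complex_of_real (2 / t) * complex_of_real (t * cos t / 4) + 1 * complex_of_real (xi t) - 0) \<le> (1::real)"
        by simp
    qed
    obtain x x' x'' where x: "C2_on {\<tau><..} x x' x''"
      "\<forall>t\<in>{\<tau><..}. 1 * x'' t + complex_of_real (2 / t) * x' t + 1 * x t = (0::complex)"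
      "\<forall>t\<in>{\<tau><..}. norm (complex_of_real (xi t) - x t) \<le> L * 1"
      using L[rule_format, OF _ conjI[OF xi_C2c res]] by force
    show False
    proof (rule xi_far[OF assms, of "\<lambda>t. Re (x t)" "\<lambda>t. Re (x' t)" "\<lambda>t. Re (x'' t)" "L * 1"])
      fix t assume t: "t > \<tau>"
      show "((\<lambda>t. Re (x t)) has_real_derivative Re (x' t)) (at t) \<and> ((\<lambda>t. Re (x' t)) has_real_derivative Re (x'' t)) (at t)"
        using x(1) t unfolding C2_on_def by (auto intro: has_field_derivative_Re)
      have "Re (1 * x'' t + complex_of_real (2 / t) * x' t + 1 * x t) = 0" using x(2) t by simp
      thus "Re (x'' t) + 2 / t * Re (x' t) + Re (x t) = 0" by simp
      have "\<bar>Re (complex_of_real (xi t) - x t)\<bar> \<le> L * 1"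
        using x(3) t abs_Re_le_cmod order_trans by fastforce
      thus "\<bar>xi t - Re (x t)\<bar> \<le> L * 1" by simp
    qed
  qed
qed

end
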